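(* Let $A\subseteq\mathcal{R}$ be outer measurable and let $(I_n)_{n\ge1}$ be pairwise disjoint intervals in $\mathcal{R}$ with $\lim_{n\to\infty}l(I_n)=0$. Then $A\setminus\bigcup_{n=1}^\infty I_n$ is outer measurable, the limit $\lim_{k\to\infty}M_u\big(A\setminus\bigcup_{n=1}^k I_n\big)$ exists in $\mathcal{R}$, and $$M_u\Big(A\setminus\bigcup_{n=1}^\infty I_n\Big)=\lim_{k\to\infty}M_u\Big(A\setminus\bigcup_{n=1}^k I_n\Big).$$
   Context: $\mathcal{R}$ denotes the Levi-Civita field: functions $x:\mathbb{Q}\to\mathbb{R}$ with left-finite support, with componentwise addition and formal power series multiplication, ordered by $x>0$ iff $x\ne0$ and $x[\min\operatorname{supp}x]>0$; it is a non-Archimedean ordered field extension of $\mathbb{R}$, Cauchy complete in the order topology, in which all limits and series are taken (a series $\sum a_n$ converges iff $a_n\to0$). An interval is a set $[a,b],[a,b),(a,b]$ or $(a,b)$ with $a<b$ in $\mathcal{R}$, of length $l=b-a$. A cover of $A\subseteq\mathcal{R}$ is a sequence of intervals $(S_n)_{n\ge1}$ with $A\subseteq\bigcup_n S_n$ and $\sum_n l(S_n)$ convergent in $\mathcal{R}$. $A$ is called outer measurable if the infimum $\inf\{\sum_n l(S_n): (S_n)\text{ a cover of }A\}$ exists in $\mathcal{R}$; this infimum is then called the outer measure $M_u(A)$. (For an outer measurable $A$ and finitely many intervals, $A\setminus\bigcup_{n=1}^k I_n$ is outer measurable.) *)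

theory Defs
  imports Main "HOL.Rat" "HOL.Real"
begin

section \<open>The Levi-Civita field\<close>

definition left_finite :: "(rat \<Rightarrow> real) \<Rightarrow> bool" where
  "left_finite x \<longleftrightarrow> (\<forall>q. finite {r. x r \<noteq> 0 \<and> r \<le> q})"

typedef lc = "{x :: rat \<Rightarrow> real. left_finite x}"
  morphisms Rep_lc Abs_lc
  by (rule exI[of _ "\<lambda>_. 0"]) (simp add: left_finite_def)

setup_lifting type_definition_lc

lemma left_finite_add:
  assumes "left_finite x" "left_finite y"
  shows "left_finite (\<lambda>q. x q + y q)"
  unfolding left_finite_def
proof
  fix q
  have "{r. x r + y r \<noteq> 0 \<and> r \<le> q} \<subseteq> {r. x r \<noteq> 0 \<and> r \<le> q} \<union> {r. y r \<noteq> 0 \<and> r \<le> q}"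
    by auto
  then show "finite {r. x r + y r \<noteq> 0 \<and> r \<le> q}"
    using assms unfolding left_finite_def by (meson finite_UnI finite_subset)
qed

lemma left_finite_uminus:
  assumes "left_finite x"
  shows "left_finite (\<lambda>q. - x q)"
  using assms unfolding left_finite_def by simp

instantiation lc :: ab_group_add
begin
lift_definition zero_lc :: lc is "\<lambda>_. 0" by (simp add: left_finite_def)
lift_definition plus_lc :: "lc \<Rightarrow> lc \<Rightarrow> lc" is "\<lambda>x y q. x q + y q"
  by (rule left_finite_add)
lift_definition uminus_lc :: "lc \<Rightarrow> lc" is "\<lambda>x q. - x q"
  by (rule left_finite_uminus)
lift_definition minus_lc :: "lc \<Rightarrow> lc \<Rightarrow> lc" is "\<lambda>x y q. x q - y q"
  using left_finite_add left_finite_uminus by fastforce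
instance
  by standard (transfer; auto simp: algebra_simps)+
end

text \<open>Formal power series (convolution) multiplication and unit; not needed for
  the statement below but recorded for completeness.  For left-finite x, y the
  index set of the sum is finite.\<close>
instantiation lc :: "{times, one}"
begin
definition one_lc :: lc where
  "one_lc = Abs_lc (\<lambda>q. if q = 0 then 1 else 0)"
definition times_lc :: "lc \<Rightarrow> lc \<Rightarrow> lc" where
  "times_lc x y = Abs_lc (\<lambda>q. \<Sum>p\<in>{(a, b). Rep_lc x a \<noteq> 0 \<and> Rep_lc y b \<noteq> 0 \<and> a + b = q}.
       Rep_lc x (fst p) * Rep_lc y (snd p))"
instance ..
end

definition lc_pos :: "lc \<Rightarrow> bool" where
  "lc_pos x \<longleftrightarrow> x \<noteq> 0 \<and> Rep_lc x (LEAST q. Rep_lc x q \<noteq> 0) > 0"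

instantiation lc :: ord
begin
definition less_lc :: "lc \<Rightarrow> lc \<Rightarrow> bool" where
  "less_lc x y \<longleftrightarrow> lc_pos (y - x)"
definition less_eq_lc :: "lc \<Rightarrow> lc \<Rightarrow> bool" where
  "less_eq_lc x y \<longleftrightarrow> x < y \<or> x = y"
instance ..
end

definition lc_lim :: "(nat \<Rightarrow> lc) \<Rightarrow> lc \<Rightarrow> bool" where
  "lc_lim X L \<longleftrightarrow> (\<forall>e::lc. 0 < e \<longrightarrow> (\<exists>N. \<forall>n\<ge>N. L - e < X n \<and> X n < L + e))"

definition lc_sums :: "(nat \<Rightarrow> lc) \<Rightarrow> lc \<Rightarrow> bool" where
  "lc_sums a s \<longleftrightarrow> lc_lim (\<lambda>k. \<Sum>n\<in>{1..k}. a n) s"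

definition lc_interval :: "lc set \<Rightarrow> bool" where
  "lc_interval S \<longleftrightarrow> (\<exists>a b. a < b \<and> S \<in> {{a..b}, {a..<b}, {a<..b}, {a<..<b}})"

definition lc_len :: "lc set \<Rightarrow> lc" where
  "lc_len S = (THE d. \<exists>a b. a < b \<and> S \<in> {{a..b}, {a..<b}, {a<..b}, {a<..<b}} \<and> d = b - a)"

definition lc_cover :: "lc set \<Rightarrow> (nat \<Rightarrow> lc set) \<Rightarrow> bool" where
  "lc_cover A S \<longleftrightarrow> (\<forall>n\<ge>1. lc_interval (S n)) \<and> A \<subseteq> (\<Union>n\<in>{1..}. S n)
     \<and> (\<exists>s. lc_sums (\<lambda>n. lc_len (S n)) s)"

definition cover_sums :: "lc set \<Rightarrow> lc set" where
  "cover_sums A = {s. \<exists>S. lc_cover A S \<and> lc_sums (\<lambda>n. lc_len (S n)) s}"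

definition lc_is_inf :: "lc set \<Rightarrow> lc \<Rightarrow> bool" where
  "lc_is_inf C m \<longleftrightarrow> (\<forall>s\<in>C. m \<le> s) \<and> (\<forall>m'. (\<forall>s\<in>C. m' \<le> s) \<longrightarrow> m' \<le> m)"

definition outer_measurable :: "lc set \<Rightarrow> bool" where
  "outer_measurable A \<longleftrightarrow> (\<exists>m. lc_is_inf (cover_sums A) m)"

definition M_u :: "lc set \<Rightarrow> lc" where
  "M_u A = (THE m. lc_is_inf (cover_sums A) m)"

end

theory Submission imports Defs begin

lemma rep_eq_iff: "x = y \<longleftrightarrow> (\<forall>q. Rep_lc x q = Rep_lc y q)"
  by (metis Rep_lc_inject ext)

lemma lf_supp_min:
  assumes "left_finite f" "f q0 \<noteq> 0"
  shows "\<exists>t. f t \<noteq> 0 \<and> (\<forall>r<t. f r = 0)"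
proof -
  let ?S = "{r. f r \<noteq> 0 \<and> r \<le> q0}"
  have fin: "finite ?S" using assms(1) unfolding left_finite_def by blast
  have ne: "q0 \<in> ?S" using assms(2) by auto
  define t where "t = Min ?S"
  have tS: "t \<in> ?S" unfolding t_def using fin ne Min_in by blast
  have "\<forall>r<t. f r = 0"
  proof (intro allI impI, rule ccontr)
    fix r assume "r < t" "f r \<noteq> 0"
    then have "r \<in> ?S" using tS by auto
    then have "t \<le> r" unfolding t_def using fin Min_le by blast
    with \<open>r < t\<close> show False by simp
  qed
  with tS show ?thesis by blast
qed

lemma lead_exists:
  assumes "Rep_lc x q0 \<noteq> 0"
  shows "\<exists>t. Rep_lc x t \<noteq> 0 \<and> (\<forall>r<t. Rep_lc x r = 0)"
  using lf_supp_min[of "Rep_lc x" q0] assms Rep_lc by auto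

lemma lc_pos_iff: "lc_pos x \<longleftrightarrow> (\<exists>q. 0 < Rep_lc x q \<and> (\<forall>r<q. Rep_lc x r = 0))"
proof
  assume "lc_pos x"
  then have nz: "x \<noteq> 0" and pos: "Rep_lc x (LEAST q. Rep_lc x q \<noteq> 0) > 0"
    unfolding lc_pos_def by auto
  from nz obtain q0 where "Rep_lc x q0 \<noteq> 0"
    by (metis rep_eq_iff zero_lc.rep_eq)
  then obtain t where t: "Rep_lc x t \<noteq> 0" "\<forall>r<t. Rep_lc x r = 0"
    using lead_exists by blast
  have "(LEAST q. Rep_lc x q \<noteq> 0) = t"
    by (rule Least_equality) (use t in \<open>auto simp: not_less[symmetric]\<close>)
  with pos t show "\<exists>q. 0 < Rep_lc x q \<and> (\<forall>r<q. Rep_lc x r = 0)" by auto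
next
  assume "\<exists>q. 0 < Rep_lc x q \<and> (\<forall>r<q. Rep_lc x r = 0)"
  then obtain t where t: "0 < Rep_lc x t" "\<forall>r<t. Rep_lc x r = 0" by blast
  have "(LEAST q. Rep_lc x q \<noteq> 0) = t"
    by (rule Least_equality) (use t in \<open>auto simp: not_less[symmetric]\<close>)
  moreover have "x \<noteq> 0" using t by (auto simp: zero_lc.rep_eq)
  ultimately show "lc_pos x" using t unfolding lc_pos_def by auto
qed

lemma lead_unique:
  assumes "Rep_lc x p \<noteq> 0" "\<forall>r<p. Rep_lc x r = 0"
    "Rep_lc x t \<noteq> 0" "\<forall>r<t. Rep_lc x r = 0"
  shows "p = t"
  using assms by (metis linorder_neqE)

lemma pos_add: "lc_pos x \<Longrightarrow> lc_pos y \<Longrightarrow> lc_pos (x + y)"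
proof -
  assume "lc_pos x" "lc_pos y"
  then obtain p t where p: "0 < Rep_lc x p" "\<forall>r<p. Rep_lc x r = 0"
    and t: "0 < Rep_lc y t" "\<forall>r<t. Rep_lc y r = 0"
    unfolding lc_pos_iff by blast
  show ?thesis unfolding lc_pos_iff plus_lc.rep_eq
  proof (cases p t rule: linorder_cases)
    case less then show "\<exists>q. 0 < Rep_lc x q + Rep_lc y q \<and> (\<forall>r<q. Rep_lc x r + Rep_lc y r = 0)"
      using p t by (intro exI[of _ p]) auto
  next
    case equal then show "\<exists>q. 0 < Rep_lc x q + Rep_lc y q \<and> (\<forall>r<q. Rep_lc x r + Rep_lc y r = 0)"
      using p t by (intro exI[of _ p]) auto
  next
    case greater then show "\<exists>q. 0 < Rep_lc x q + Rep_lc y q \<and> (\<forall>r<q. Rep_lc x r + Rep_lc y r = 0)"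
      using p t by (intro exI[of _ t]) auto
  qed
qed

lemma pos_not_zero: "\<not> lc_pos 0"
  unfolding lc_pos_def by simp

lemma pos_not_both: "lc_pos x \<Longrightarrow> \<not> lc_pos (- x)"
proof
  assume "lc_pos x" "lc_pos (- x)"
  then obtain p t where p: "0 < Rep_lc x p" "\<forall>r<p. Rep_lc x r = 0"
    and t: "0 < - Rep_lc x t" "\<forall>r<t. - Rep_lc x r = 0"
    unfolding lc_pos_iff uminus_lc.rep_eq by blast
  have "p = t" by (rule lead_unique[of x]) (use p t in auto)
  with p t show False by auto
qed

lemma pos_or_neg: "x \<noteq> 0 \<Longrightarrow> lc_pos x \<or> lc_pos (- x)"
proof -
  assume "x \<noteq> 0"
  then obtain q0 where "Rep_lc x q0 \<noteq> 0" by (metis rep_eq_iff zero_lc.rep_eq)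
  then obtain t where t: "Rep_lc x t \<noteq> 0" "\<forall>r<t. Rep_lc x r = 0"
    using lead_exists by blast
  show ?thesis
  proof (cases "Rep_lc x t > 0")
    case True then show ?thesis unfolding lc_pos_iff using t by blast
  next
    case False then have "0 < Rep_lc (-x) t" using t by (simp add: uminus_lc.rep_eq)
    then show ?thesis unfolding lc_pos_iff using t by (auto simp: uminus_lc.rep_eq)
  qed
qed

instance lc :: linordered_ab_group_add
proof
  fix x y z :: lc
  show "(x < y) = (x \<le> y \<and> \<not> y \<le> x)"
    unfolding less_eq_lc_def less_lc_def
    by (metis diff_self minus_diff_eq pos_not_both pos_not_zero)
  show "x \<le> x" unfolding less_eq_lc_def by simp
  show "x \<le> y \<Longrightarrow> y \<le> z \<Longrightarrow> x \<le> z"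
    unfolding less_eq_lc_def less_lc_def
    by (metis diff_add_cancel add_diff_eq diff_diff_eq2 pos_add add.commute)
  show "x \<le> y \<Longrightarrow> y \<le> x \<Longrightarrow> x = y"
    unfolding less_eq_lc_def less_lc_def
    by (metis minus_diff_eq pos_not_both)
  show "x \<le> y \<Longrightarrow> z + x \<le> z + y"
    unfolding less_eq_lc_def less_lc_def by simp
  show "x \<le> y \<or> y \<le> x"
    unfolding less_eq_lc_def less_lc_def
    by (metis eq_iff_diff_eq_0 minus_diff_eq pos_or_neg)
qed


lemma zero_less_iff: "0 < x \<longleftrightarrow> lc_pos x" by (simp add: less_lc_def)
lemma less_iff_pos: "x < y \<longleftrightarrow> lc_pos (y - x)" by (simp add: less_lc_def)

lift_definition half :: "lc \<Rightarrow> lc" is "\<lambda>x q. x q / 2"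
  unfolding left_finite_def by simp

lemma half_double: "half x + half x = x"
  by transfer auto

lemma half_pos: "0 < x \<Longrightarrow> 0 < half x"
  unfolding zero_less_iff lc_pos_iff half.rep_eq by auto

instance lc :: dense_linorder
proof
  fix x y :: lc assume "x < y"
  then have h: "0 < half (y - x)" by (simp add: half_pos)
  have "y - (x + half (y - x)) = half (y - x)"
    using half_double[of "y - x"] by (simp add: algebra_simps)
  then have "x + half (y - x) < y" using h by (metis diff_gt_0_iff_gt)
  moreover have "x < x + half (y - x)" using h by simp
  ultimately show "\<exists>z>x. z < y" by blast
qed

lift_definition E :: "rat \<Rightarrow> lc" is "\<lambda>q r. if r = q then 1 else 0"
proof -
  fix q :: rat
  show "left_finite (\<lambda>r. if r = q then 1 else (0::real))"
    unfolding left_finite_def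
    by (intro allI; rule finite_subset[of _ "{q}"]) auto
qed

lemma E_pos: "0 < E q"
  unfolding zero_less_iff lc_pos_iff E.rep_eq by (intro exI[of _ q]) auto

definition small :: "rat \<Rightarrow> lc \<Rightarrow> bool" where
  "small q x \<longleftrightarrow> (\<forall>r\<le>q. Rep_lc x r = 0)"

lemma small_add: "small q x \<Longrightarrow> small q y \<Longrightarrow> small q (x + y)"
  by (simp add: small_def plus_lc.rep_eq)
lemma small_diff: "small q x \<Longrightarrow> small q y \<Longrightarrow> small q (x - y)"
  by (simp add: small_def minus_lc.rep_eq)
lemma small_uminus: "small q x \<Longrightarrow> small q (- x)"
  by (simp add: small_def uminus_lc.rep_eq)
lemma small_zero: "small q 0"
  by (simp add: small_def zero_lc.rep_eq)
lemma small_mono: "small q x \<Longrightarrow> p \<le> q \<Longrightarrow> small p x"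
  by (simp add: small_def)

lemma small_lt:
  assumes "0 < e" shows "\<exists>q. \<forall>x. small q x \<longrightarrow> - e < x \<and> x < e"
proof -
  obtain p where p: "0 < Rep_lc e p" "\<forall>r<p. Rep_lc e r = 0"
    using assms unfolding zero_less_iff lc_pos_iff by blast
  have "x < e" if "small p x" for x
  proof -
    have "\<forall>r\<le>p. Rep_lc x r = 0" using that unfolding small_def .
    then have "0 < Rep_lc e p - Rep_lc x p \<and> (\<forall>r<p. Rep_lc e r - Rep_lc x r = 0)"
      using p by simp
    then show ?thesis unfolding less_iff_pos lc_pos_iff minus_lc.rep_eq by blast
  qed
  moreover have "- e < x" if "small p x" for x
  proof -
    have "\<forall>r\<le>p. Rep_lc x r = 0" using that unfolding small_def .
    then have "0 < Rep_lc e p - - Rep_lc x p \<and> (\<forall>r<p. Rep_lc e r - - Rep_lc x r = 0)"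
      using p by simp
    then have "- x < e" unfolding less_iff_pos lc_pos_iff minus_lc.rep_eq uminus_lc.rep_eq by blast
    then show ?thesis by (simp add: minus_less_iff)
  qed
  ultimately show ?thesis by blast
qed

lemma not_le_E:
  assumes "0 < Rep_lc x t" "\<forall>r<t. Rep_lc x r = 0" "t < q"
  shows "\<not> x \<le> E q"
proof
  assume "x \<le> E q"
  then consider "x = E q" | "x < E q" by (auto simp: less_eq_lc_def)
  then show False
  proof cases
    case 1
    then show False using assms by (auto simp: E.rep_eq)
  next
    case 2
    then obtain p where p: "0 < Rep_lc (E q - x) p" "\<forall>r<p. Rep_lc (E q - x) r = 0"
      unfolding less_iff_pos lc_pos_iff by blast
    have "Rep_lc (E q - x) t \<noteq> 0" "\<forall>r<t. Rep_lc (E q - x) r = 0"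
      using assms by (auto simp: minus_lc.rep_eq E.rep_eq)
    then have "p = t" using p lead_unique[of "E q - x" p t] by auto
    then show False using p assms by (auto simp: minus_lc.rep_eq E.rep_eq)
  qed
qed

lemma le_E_small:
  assumes "x \<le> E q'" "- x \<le> E q'" "q < q'"
  shows "small q x"
proof (rule ccontr)
  assume "\<not> small q x"
  then obtain r where r: "r \<le> q" "Rep_lc x r \<noteq> 0" unfolding small_def by blast
  then obtain t where t: "Rep_lc x t \<noteq> 0" "\<forall>r<t. Rep_lc x r = 0"
    using lead_exists by blast
  have "t \<le> r" using t r by (metis not_less)
  then have tq: "t < q'" using r assms by simp
  show False
  proof (cases "0 < Rep_lc x t")
    case True
    have "x \<le> E q'" using assms(1) by blast
    then show False using not_le_E[OF True t(2) tq] by blast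
  next
    case False
    then have "0 < Rep_lc (- x) t" "\<forall>r<t. Rep_lc (-x) r = 0" using t by (auto simp: uminus_lc.rep_eq)
    moreover have "- x \<le> E q'" using assms(2) by blast
    ultimately show False using not_le_E tq by blast
  qed
qed

lemma small_E: "q < p \<Longrightarrow> small q (E p)"
  by (auto simp: small_def E.rep_eq)

lemma small_imp_le:
  assumes "small q y" "0 \<le> x" "x \<le> y"
  shows "small q x"
proof (rule ccontr)
  assume "\<not> small q x"
  then obtain r where r: "r \<le> q" "Rep_lc x r \<noteq> 0" unfolding small_def by blast
  then obtain t where t: "Rep_lc x t \<noteq> 0" "\<forall>r<t. Rep_lc x r = 0"
    using lead_exists by blast
  have "t \<le> r" using t r by (metis not_less)
  then have tq: "t \<le> q" using r by simp
  show False
  proof (cases "0 < Rep_lc x t")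
    case True
    have "lc_pos (x - y)" unfolding lc_pos_iff minus_lc.rep_eq
      using True t tq assms(1) unfolding small_def by (intro exI[of _ t]) auto
    then have "y < x" by (simp add: less_iff_pos)
    then show False using assms by simp
  next
    case False
    have "lc_pos (0 - x)" unfolding lc_pos_iff minus_lc.rep_eq zero_lc.rep_eq
      using False t by (intro exI[of _ t]) auto
    then have "x < 0" by (simp add: less_iff_pos)
    then show False using assms by simp
  qed
qed

lemma lim_iff_small: "lc_lim X L \<longleftrightarrow> (\<forall>q. \<exists>N. \<forall>n\<ge>N. small q (X n - L))"
proof
  assume H: "lc_lim X L"
  show "\<forall>q. \<exists>N. \<forall>n\<ge>N. small q (X n - L)"
  proof
    fix q :: rat
    obtain N where N: "\<forall>n\<ge>N. L - E (q+1) < X n \<and> X n < L + E (q+1)"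
      using H E_pos unfolding lc_lim_def by blast
    have "small q (X n - L)" if "n \<ge> N" for n
    proof (rule le_E_small)
      show "X n - L \<le> E (q + 1)" "- (X n - L) \<le> E (q + 1)" using N that by (auto simp: algebra_simps)
    qed simp
    then show "\<exists>N. \<forall>n\<ge>N. small q (X n - L)" by blast
  qed
next
  assume H: "\<forall>q. \<exists>N. \<forall>n\<ge>N. small q (X n - L)"
  show "lc_lim X L" unfolding lc_lim_def
  proof (intro allI impI)
    fix e :: lc assume "0 < e"
    then obtain q where q: "\<forall>x. small q x \<longrightarrow> - e < x \<and> x < e" using small_lt by blast
    obtain N where "\<forall>n\<ge>N. small q (X n - L)" using H by blast
    then show "\<exists>N. \<forall>n\<ge>N. L - e < X n \<and> X n < L + e"
      using q by (intro exI[of _ N]) (auto simp: algebra_simps)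
  qed
qed


lemma lim_unique:
  assumes "lc_lim X L" "lc_lim X L'" shows "L = L'"
proof -
  have "Rep_lc L r = Rep_lc L' r" for r
  proof -
    obtain N1 where N1: "\<forall>n\<ge>N1. small r (X n - L)" using assms(1) unfolding lim_iff_small by blast
    obtain N2 where N2: "\<forall>n\<ge>N2. small r (X n - L')" using assms(2) unfolding lim_iff_small by blast
    have "small r ((X (max N1 N2) - L') - (X (max N1 N2) - L))"
      by (rule small_diff) (use N1 N2 in auto)
    then show ?thesis by (auto simp: small_def minus_lc.rep_eq)
  qed
  then show ?thesis by (simp add: rep_eq_iff)
qed

lemma lim_const: "lc_lim (\<lambda>n. c) c"
  unfolding lim_iff_small by (simp add: small_zero)

lemma lim_add:
  assumes "lc_lim X a" "lc_lim Y b" shows "lc_lim (\<lambda>n. X n + Y n) (a + b)"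
  unfolding lim_iff_small
proof
  fix q
  obtain N1 where N1: "\<forall>n\<ge>N1. small q (X n - a)" using assms(1) unfolding lim_iff_small by blast
  obtain N2 where N2: "\<forall>n\<ge>N2. small q (Y n - b)" using assms(2) unfolding lim_iff_small by blast
  have "small q (X n + Y n - (a + b))" if "n \<ge> max N1 N2" for n
  proof -
    have "small q ((X n - a) + (Y n - b))" by (rule small_add) (use N1 N2 that in auto)
    then show ?thesis by (simp add: algebra_simps)
  qed
  then show "\<exists>N. \<forall>n\<ge>N. small q (X n + Y n - (a + b))" by blast
qed

lemma lim_diff:
  assumes "lc_lim X a" "lc_lim Y b" shows "lc_lim (\<lambda>n. X n - Y n) (a - b)"
  unfolding lim_iff_small
proof
  fix q
  obtain N1 where N1: "\<forall>n\<ge>N1. small q (X n - a)" using assms(1) unfolding lim_iff_small by blast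
  obtain N2 where N2: "\<forall>n\<ge>N2. small q (Y n - b)" using assms(2) unfolding lim_iff_small by blast
  have "small q (X n - Y n - (a - b))" if "n \<ge> max N1 N2" for n
  proof -
    have "small q ((X n - a) - (Y n - b))" by (rule small_diff) (use N1 N2 that in auto)
    then show ?thesis by (simp add: algebra_simps)
  qed
  then show "\<exists>N. \<forall>n\<ge>N. small q (X n - Y n - (a - b))" by blast
qed

lemma lim_reindex:
  assumes "lc_lim X L" "\<And>N. \<exists>M. \<forall>n\<ge>M. N \<le> f n"
  shows "lc_lim (\<lambda>n. X (f n)) L"
  unfolding lim_iff_small
proof
  fix q
  obtain N where N: "\<forall>n\<ge>N. small q (X n - L)" using assms(1) unfolding lim_iff_small by blast
  obtain M where "\<forall>n\<ge>M. N \<le> f n" using assms(2) by blast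
  then show "\<exists>M. \<forall>n\<ge>M. small q (X (f n) - L)" using N by blast
qed

lemma lim_le:
  assumes "lc_lim X L" "\<And>n. X n \<le> c" shows "L \<le> c"
proof (rule ccontr)
  assume "\<not> L \<le> c"
  then have "0 < L - c" by simp
  then obtain N where "\<forall>n\<ge>N. L - (L - c) < X n \<and> X n < L + (L - c)"
    using assms(1) unfolding lc_lim_def by blast
  then have "c < X N" by auto
  with assms(2)[of N] show False by simp
qed

lemma lim_ge:
  assumes "lc_lim X L" "\<And>n. c \<le> X n" shows "c \<le> L"
proof (rule ccontr)
  assume "\<not> c \<le> L"
  then have "0 < c - L" by simp
  then obtain N where "\<forall>n\<ge>N. L - (c - L) < X n \<and> X n < L + (c - L)"
    using assms(1) unfolding lc_lim_def by blast
  then have "X N < c" by auto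
  with assms(2)[of N] show False by simp
qed

lemma lim_sandwich:
  assumes "\<And>n. 0 \<le> X n" "\<And>n. X n \<le> Y n" "lc_lim Y 0" shows "lc_lim X 0"
  unfolding lim_iff_small
proof
  fix q
  obtain N where N: "\<forall>n\<ge>N. small q (Y n - 0)" using assms(3) unfolding lim_iff_small by blast
  have "small q (X n - 0)" if "n \<ge> N" for n
    using small_imp_le[of q "Y n" "X n"] N that assms(1,2) by simp
  then show "\<exists>N. \<forall>n\<ge>N. small q (X n - 0)" by blast
qed

lemma lim_cauchy:
  assumes "\<And>q. \<exists>N. \<forall>m\<ge>N. \<forall>n\<ge>N. small q (X m - X n)"
  shows "\<exists>L. lc_lim X L"
proof -
  have "\<forall>q. \<exists>N. \<forall>m\<ge>N. \<forall>n\<ge>N. small q (X m - X n)" using assms by blast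
  then obtain N where N: "\<And>q. \<forall>m\<ge>N q. \<forall>n\<ge>N q. small q (X m - X n)"
    using choice[of "\<lambda>q N. \<forall>m\<ge>N. \<forall>n\<ge>N. small q (X m - X n)"] by blast
  have key: "Rep_lc (X m) r = Rep_lc (X (N q)) r" if "r \<le> q" "m \<ge> N q" for r q m
  proof -
    have "small q (X m - X (N q))" using N[of q] that by simp
    then have "Rep_lc (X m - X (N q)) r = 0" using that unfolding small_def by blast
    then show ?thesis by (simp add: minus_lc.rep_eq)
  qed
  define g where "g r = Rep_lc (X (N r)) r" for r
  have g_eq: "g r = Rep_lc (X (N q)) r" if "r \<le> q" for r q
  proof -
    have "g r = Rep_lc (X (max (N r) (N q))) r" unfolding g_def using key[of r r "max (N r) (N q)"] by simp
    also have "\<dots> = Rep_lc (X (N q)) r" using key[of r q "max (N r) (N q)"] that by simp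
    finally show ?thesis .
  qed
  have lf: "left_finite g"
    unfolding left_finite_def
  proof
    fix q
    have "{r. g r \<noteq> 0 \<and> r \<le> q} = {r. Rep_lc (X (N q)) r \<noteq> 0 \<and> r \<le> q}"
      using g_eq by auto
    then show "finite {r. g r \<noteq> 0 \<and> r \<le> q}"
      using Rep_lc[of "X (N q)"] unfolding left_finite_def by simp
  qed
  define L where "L = Abs_lc g"
  have RL: "Rep_lc L = g" unfolding L_def using lf by (simp add: Abs_lc_inverse)
  have "lc_lim X L" unfolding lim_iff_small
  proof
    fix q
    have "small q (X n - L)" if "n \<ge> N q" for n
      unfolding small_def minus_lc.rep_eq RL
    proof (intro allI impI)
      fix r assume "r \<le> q"
      then show "Rep_lc (X n) r - g r = 0" using key[of r q n] that g_eq[of r q] by simp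
    qed
    then show "\<exists>M. \<forall>n\<ge>M. small q (X n - L)" by blast
  qed
  then show ?thesis by blast
qed

lemma Rep_sum: "Rep_lc (sum f A) r = (\<Sum>i\<in>A. Rep_lc (f i) r)"
proof (induction A rule: infinite_finite_induct)
  case (infinite A) then show ?case by (simp add: zero_lc.rep_eq)
next
  case empty then show ?case by (simp add: zero_lc.rep_eq)
next
  case (insert x F) then show ?case by (simp add: plus_lc.rep_eq)
qed

definition PS :: "(nat \<Rightarrow> lc) \<Rightarrow> nat \<Rightarrow> lc" where
  "PS a k = (\<Sum>n\<in>{1..k}. a n)"

lemma sums_PS: "lc_sums a s \<longleftrightarrow> lc_lim (PS a) s"
  unfolding lc_sums_def PS_def by simp

lemma PS_Suc: "PS a (Suc k) = PS a k + a (Suc k)"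
  unfolding PS_def by simp

lemma PS_0: "PS a 0 = 0"
  unfolding PS_def by simp

lemma sum_stable:
  fixes f :: "nat \<Rightarrow> real"
  assumes "\<And>i. i > N \<Longrightarrow> f i = 0" "m \<ge> N"
  shows "(\<Sum>i\<in>{1..m}. f i) = (\<Sum>i\<in>{1..N}. f i)"
  by (rule sum.mono_neutral_right) (use assms in auto)

lemma series_conv:
  assumes "\<And>q. \<exists>N. \<forall>n\<ge>N. small q (a n)"
  shows "\<exists>s. lc_sums a s"
  unfolding sums_PS
proof (rule lim_cauchy)
  fix q
  obtain N where N: "\<forall>n\<ge>N. small q (a n)" using assms by blast
  have "small q (PS a m - PS a n)" if "m \<ge> N" "n \<ge> N" for m n
    unfolding small_def
  proof (intro allI impI)
    fix r assume r: "r \<le> q"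
    have z: "Rep_lc (a i) r = 0" if "i > N" for i using N that r by (auto simp: small_def)
    show "Rep_lc (PS a m - PS a n) r = 0"
    proof -
      have e1: "(\<Sum>i\<in>{1..m}. Rep_lc (a i) r) = (\<Sum>i\<in>{1..N}. Rep_lc (a i) r)"
        by (rule sum_stable) (use z that in auto)
      have e2: "(\<Sum>i\<in>{1..n}. Rep_lc (a i) r) = (\<Sum>i\<in>{1..N}. Rep_lc (a i) r)"
        by (rule sum_stable) (use z that in auto)
      show ?thesis unfolding minus_lc.rep_eq PS_def Rep_sum e1 e2 by simp
    qed
  qed
  then show "\<exists>N. \<forall>m\<ge>N. \<forall>n\<ge>N. small q (PS a m - PS a n)" by blast
qed

lemma sums_terms:
  assumes "lc_sums a s"
  shows "\<exists>N. \<forall>n\<ge>N. small q (a n)"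
proof -
  obtain N where N: "\<forall>n\<ge>N. small q (PS a n - s)" using assms unfolding sums_PS lim_iff_small by blast
  have "small q (a n)" if "n \<ge> Suc N" for n
  proof -
    define k where "k = n - 1"
    have k: "n = Suc k" "k \<ge> N" using that unfolding k_def by auto
    have s1: "small q (PS a (Suc k) - s)" using N k by simp
    have s2: "small q (PS a k - s)" using N k by simp
    have "small q ((PS a (Suc k) - s) - (PS a k - s))" using s1 s2 by (rule small_diff)
    moreover have "(PS a (Suc k) - s) - (PS a k - s) = a n" using k by (simp add: PS_Suc)
    ultimately show ?thesis by simp
  qed
  then show ?thesis by blast
qed

lemma terms_lim0: "lc_sums a s \<Longrightarrow> lc_lim a 0"
  unfolding lim_iff_small using sums_terms by simp

lemma sums_add:
  assumes "lc_sums a s" "lc_sums b t" shows "lc_sums (\<lambda>n. a n + b n) (s + t)"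
proof -
  have "PS (\<lambda>n. a n + b n) = (\<lambda>k. PS a k + PS b k)"
    unfolding PS_def by (simp add: sum.distrib)
  then show ?thesis using lim_add assms unfolding sums_PS by metis
qed

lemma sums_cong:
  assumes "lc_sums a s" "\<And>n. n \<ge> 1 \<Longrightarrow> a n = b n" shows "lc_sums b s"
proof -
  have "PS a = PS b" unfolding PS_def using assms(2) by (intro ext sum.cong) auto
  then show ?thesis using assms(1) unfolding sums_PS by simp
qed

lemma PS_shift: "PS (\<lambda>n. a (n + k)) m = PS a (m + k) - PS a k"
proof (induction m)
  case 0 then show ?case by (simp add: PS_0)
next
  case (Suc m) then show ?case by (simp add: PS_Suc algebra_simps)
qed

lemma sums_shift:
  assumes "lc_sums a s" shows "lc_sums (\<lambda>n. a (n + k)) (s - PS a k)"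
proof -
  have r: "\<exists>M. \<forall>n\<ge>M. N \<le> n + k" for N by (rule exI[of _ N]) auto
  have "lc_lim (\<lambda>m. PS a (m + k)) s"
    using assms unfolding sums_PS by (rule lim_reindex) (rule r)
  then have "lc_lim (\<lambda>m. PS a (m + k) - PS a k) (s - PS a k)"
    using lim_diff lim_const by blast
  then show ?thesis unfolding sums_PS PS_shift by simp
qed

lemma sums_compare:
  assumes "\<And>n. n \<ge> 1 \<Longrightarrow> 0 \<le> a n \<and> a n \<le> b n" "lc_sums b t"
  shows "\<exists>s. lc_sums a s"
proof (rule series_conv)
  fix q
  obtain N where N: "\<forall>n\<ge>N. small q (b n)" using sums_terms[OF assms(2)] by blast
  have "small q (a n)" if "n \<ge> max N 1" for n
  proof -
    have "small q (b n)" using N that by simp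
    moreover have "0 \<le> a n" "a n \<le> b n" using assms(1)[of n] that by auto
    ultimately show ?thesis by (rule small_imp_le)
  qed
  then show "\<exists>N. \<forall>n\<ge>N. small q (a n)" by blast
qed

definition il :: "(nat \<Rightarrow> 'a) \<Rightarrow> (nat \<Rightarrow> 'a) \<Rightarrow> nat \<Rightarrow> 'a" where
  "il a b n = (if even n then b (n div 2) else a ((n + 1) div 2))"

lemma PS_il: "PS (il a b) n = PS a ((n + 1) div 2) + PS b (n div 2)"
proof (induction n)
  case 0 then show ?case by (simp add: PS_0)
next
  case (Suc n)
  show ?case
  proof (cases "even n")
    case True
    then obtain j where j: "n = 2 * j" by blast
    have "il a b (Suc n) = a (Suc j)" using j by (simp add: il_def)
    then have "PS (il a b) (Suc n) = PS a j + PS b j + a (Suc j)"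
      using Suc j by (simp add: PS_Suc)
    moreover have "(Suc n + 1) div 2 = Suc j" "Suc n div 2 = j" "(n + 1) div 2 = j" using j by auto
    ultimately show ?thesis by (simp add: PS_Suc algebra_simps)
  next
    case False
    then obtain j where j: "n = 2 * j + 1" using oddE by blast
    have "il a b (Suc n) = b (Suc j)" using j by (simp add: il_def)
    then have "PS (il a b) (Suc n) = PS a (Suc j) + PS b j + b (Suc j)"
      using Suc j by (simp add: PS_Suc)
    moreover have "(Suc n + 1) div 2 = Suc j" "Suc n div 2 = Suc j" using j by auto
    ultimately show ?thesis by (simp add: PS_Suc algebra_simps)
  qed
qed

lemma sums_il:
  assumes "lc_sums a s" "lc_sums b t" shows "lc_sums (il a b) (s + t)"
proof -
  have r1: "\<exists>M. \<forall>n\<ge>M. N \<le> ((n::nat) + 1) div 2" for N by (rule exI[of _ "2 * N"]) auto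
  have r2: "\<exists>M. \<forall>n\<ge>M. N \<le> (n::nat) div 2" for N by (rule exI[of _ "2 * N"]) auto
  have 1: "lc_lim (\<lambda>n. PS a ((n + 1) div 2)) s"
    using assms(1) unfolding sums_PS by (rule lim_reindex) (rule r1)
  have 2: "lc_lim (\<lambda>n. PS b (n div 2)) t"
    using assms(2) unfolding sums_PS by (rule lim_reindex) (rule r2)
  show ?thesis unfolding sums_PS PS_il using lim_add[OF 1 2] .
qed


lemma four_sets_lower:
  fixes a b :: lc
  assumes "a < b" "S \<in> {{a..b}, {a..<b}, {a<..b}, {a<..<b}}"
  shows "(\<forall>y\<in>S. x \<le> y) \<longleftrightarrow> x \<le> a"
proof
  assume H: "\<forall>y\<in>S. x \<le> y"
  show "x \<le> a"
  proof (rule ccontr)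
    assume "\<not> x \<le> a"
    then have "a < min x b" using assms(1) by simp
    then obtain z where z: "a < z" "z < min x b" using dense by blast
    then have "z \<in> S" using assms(2) by auto
    with H z show False by auto
  qed
next
  assume "x \<le> a"
  then show "\<forall>y\<in>S. x \<le> y" using assms(2) by auto
qed

lemma four_sets_upper:
  fixes a b :: lc
  assumes "a < b" "S \<in> {{a..b}, {a..<b}, {a<..b}, {a<..<b}}"
  shows "(\<forall>y\<in>S. y \<le> x) \<longleftrightarrow> b \<le> x"
proof
  assume H: "\<forall>y\<in>S. y \<le> x"
  show "b \<le> x"
  proof (rule ccontr)
    assume "\<not> b \<le> x"
    then have "max x a < b" using assms(1) by simp
    then obtain z where z: "max x a < z" "z < b" using dense by blast
    then have "z \<in> S" using assms(2) by auto
    with H z show False by auto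
  qed
next
  assume "b \<le> x"
  then show "\<forall>y\<in>S. y \<le> x" using assms(2) by auto
qed

lemma four_sets_unique:
  fixes a b a' b' :: lc
  assumes "a < b" "S \<in> {{a..b}, {a..<b}, {a<..b}, {a<..<b}}"
    "a' < b'" "S \<in> {{a'..b'}, {a'..<b'}, {a'<..b'}, {a'<..<b'}}"
  shows "a = a' \<and> b = b'"
proof
  have "x \<le> a \<longleftrightarrow> x \<le> a'" for x
    using four_sets_lower[OF assms(1,2), of x] four_sets_lower[OF assms(3,4), of x] by simp
  then show "a = a'" by (meson order_antisym order_refl)
  have "b \<le> x \<longleftrightarrow> b' \<le> x" for x
    using four_sets_upper[OF assms(1,2), of x] four_sets_upper[OF assms(3,4), of x] by simp
  then show "b = b'" by (meson order_antisym order_refl)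
qed

lemma len_eq:
  fixes a b :: lc
  assumes "a < b" "S \<in> {{a..b}, {a..<b}, {a<..b}, {a<..<b}}"
  shows "lc_len S = b - a"
  unfolding lc_len_def
proof (rule the_equality)
  show "\<exists>a' b'. a' < b' \<and> S \<in> {{a'..b'}, {a'..<b'}, {a'<..b'}, {a'<..<b'}} \<and> b - a = b' - a'"
    using assms by blast
next
  fix d assume "\<exists>a' b'. a' < b' \<and> S \<in> {{a'..b'}, {a'..<b'}, {a'<..b'}, {a'<..<b'}} \<and> d = b' - a'"
  then obtain a' b' where "a' < b'" "S \<in> {{a'..b'}, {a'..<b'}, {a'<..b'}, {a'<..<b'}}" "d = b' - a'"
    by blast
  then show "d = b - a" using four_sets_unique[OF assms] by metis
qed

lemma interval_ends:
  assumes "lc_interval S"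
  shows "\<exists>a b. a < b \<and> lc_len S = b - a \<and> {a<..<b} \<subseteq> S \<and> S \<subseteq> {a..b}"
proof -
  obtain a b where ab: "a < b" "S \<in> {{a..b}, {a..<b}, {a<..b}, {a<..<b}}"
    using assms unfolding lc_interval_def by blast
  have "{a<..<b} \<subseteq> S \<and> S \<subseteq> {a..b}" using ab(2) by auto
  then show ?thesis using len_eq[OF ab] ab(1) by blast
qed

definition pc :: "lc set \<Rightarrow> (nat \<Rightarrow> lc) \<Rightarrow> (nat \<Rightarrow> lc) \<Rightarrow> lc \<Rightarrow> bool" where
  "pc X lo hi s \<longleftrightarrow> (\<forall>n\<ge>1. lo n \<le> hi n) \<and> X \<subseteq> (\<Union>n\<in>{1..}. {lo n..hi n})
     \<and> lc_sums (\<lambda>n. hi n - lo n) s"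

lemma cover_pc:
  assumes "s \<in> cover_sums X"
  shows "\<exists>lo hi. pc X lo hi s"
proof -
  obtain S where S: "lc_cover X S" "lc_sums (\<lambda>n. lc_len (S n)) s"
    using assms unfolding cover_sums_def by blast
  have "\<forall>n. \<exists>p. n \<ge> 1 \<longrightarrow> fst p < snd p \<and> lc_len (S n) = snd p - fst p \<and> S n \<subseteq> {fst p..snd p}"
  proof
    fix n
    show "\<exists>p. n \<ge> 1 \<longrightarrow> fst p < snd p \<and> lc_len (S n) = snd p - fst p \<and> S n \<subseteq> {fst p..snd p}"
    proof (cases "n \<ge> 1")
      case True
      then have "lc_interval (S n)" using S(1) unfolding lc_cover_def by blast
      then obtain a b where "a < b \<and> lc_len (S n) = b - a \<and> {a<..<b} \<subseteq> S n \<and> S n \<subseteq> {a..b}"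
        using interval_ends by blast
      then show ?thesis by (intro exI[of _ "(a, b)"]) auto
    qed auto
  qed
  then obtain P where P: "\<And>n. n \<ge> 1 \<Longrightarrow> fst (P n) < snd (P n) \<and> lc_len (S n) = snd (P n) - fst (P n) \<and> S n \<subseteq> {fst (P n)..snd (P n)}"
    by metis
  define lo where "lo n = fst (P n)" for n
  define hi where "hi n = snd (P n)" for n
  have "\<forall>n\<ge>1. lo n \<le> hi n" using P unfolding lo_def hi_def by (auto intro: less_imp_le)
  moreover have "X \<subseteq> (\<Union>n\<in>{1..}. {lo n..hi n})"
  proof
    fix x assume "x \<in> X"
    then obtain n where n: "n \<ge> 1" "x \<in> S n" using S(1) unfolding lc_cover_def by auto
    then have "x \<in> {lo n..hi n}" using P[of n] unfolding lo_def hi_def by auto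
    then show "x \<in> (\<Union>n\<in>{1..}. {lo n..hi n})" using n by auto
  qed
  moreover have "lc_sums (\<lambda>n. hi n - lo n) s"
    using S(2) by (rule sums_cong) (use P in \<open>auto simp: lo_def hi_def\<close>)
  ultimately show ?thesis unfolding pc_def by blast
qed

lemma pc_mono: "pc X lo hi s \<Longrightarrow> Y \<subseteq> X \<Longrightarrow> pc Y lo hi s"
  unfolding pc_def by blast

lemma il_ge1:
  assumes "n \<ge> (1::nat)"
  shows "even n \<Longrightarrow> n div 2 \<ge> 1" "odd n \<Longrightarrow> (n + 1) div 2 \<ge> 1"
  using assms by (auto elim: evenE oddE)

lemma pc_union:
  assumes "pc X la ha s" "pc Y lb hb t"
  shows "pc (X \<union> Y) (il la lb) (il ha hb) (s + t)"
proof -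
  have "il la lb n \<le> il ha hb n" if "n \<ge> 1" for n
  proof (cases "even n")
    case True then show ?thesis using assms(2) il_ge1(1)[OF that] unfolding pc_def il_def by auto
  next
    case False then show ?thesis using assms(1) il_ge1(2)[OF that] unfolding pc_def il_def by auto
  qed
  moreover have "X \<union> Y \<subseteq> (\<Union>n\<in>{1..}. {il la lb n..il ha hb n})"
  proof
    fix x assume "x \<in> X \<union> Y"
    then show "x \<in> (\<Union>n\<in>{1..}. {il la lb n..il ha hb n})"
    proof
      assume "x \<in> X"
      then obtain n where n: "n \<ge> 1" "x \<in> {la n..ha n}" using assms(1) unfolding pc_def by blast
      have "il la lb (2 * n - 1) = la n" "il ha hb (2 * n - 1) = ha n"
        using n(1) unfolding il_def by (auto simp: Suc_double_not_eq_double)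
      moreover have "2 * n - 1 \<ge> 1" using n(1) by simp
      ultimately show ?thesis using n(2) by (metis UN_iff atLeast_iff)
    next
      assume "x \<in> Y"
      then obtain n where n: "n \<ge> 1" "x \<in> {lb n..hb n}" using assms(2) unfolding pc_def by blast
      have "il la lb (2 * n) = lb n" "il ha hb (2 * n) = hb n"
        unfolding il_def by auto
      moreover have "2 * n \<ge> 1" using n(1) by simp
      ultimately show ?thesis using n(2) by (metis UN_iff atLeast_iff)
    qed
  qed
  moreover have "lc_sums (\<lambda>n. il ha hb n - il la lb n) (s + t)"
  proof -
    have "(\<lambda>n. il ha hb n - il la lb n) = il (\<lambda>n. ha n - la n) (\<lambda>n. hb n - lb n)"
      unfolding il_def by auto
    then show ?thesis using sums_il assms unfolding pc_def by metis
  qed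
  ultimately show ?thesis unfolding pc_def by blast
qed

lemma Rep_E_sum_zero:
  assumes "r \<le> p"
  shows "Rep_lc (PS (\<lambda>n. E (p + of_nat n)) k) r = 0"
  unfolding PS_def Rep_sum E.rep_eq
proof (rule sum.neutral, intro ballI)
  fix x assume "x \<in> {1..k}"
  then have "(1::rat) \<le> of_nat x" by simp
  then have "r \<noteq> p + of_nat x" using assms by linarith
  then show "(if r = p + of_nat x then 1 else 0) = (0::real)" by simp
qed

lemma small_seq:
  assumes "0 < \<epsilon>"
  shows "\<exists>\<delta> \<Delta>. (\<forall>n. 0 < \<delta> n) \<and> lc_sums \<delta> \<Delta> \<and> \<Delta> \<le> \<epsilon>"
proof -
  obtain p where p: "0 < Rep_lc \<epsilon> p" "\<forall>r<p. Rep_lc \<epsilon> r = 0"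
    using assms unfolding zero_less_iff lc_pos_iff by blast
  define \<delta> where "\<delta> n = E (p + of_nat n)" for n
  have "\<exists>\<Delta>. lc_sums \<delta> \<Delta>"
  proof (rule series_conv)
    fix q
    obtain N :: nat where N: "q - p < of_nat N" using reals_Archimedean2 by blast
    have "small q (\<delta> n)" if "n \<ge> N" for n
    proof -
      have "of_nat N \<le> (of_nat n :: rat)" using that by simp
      then have "q < p + of_nat n" using N by linarith
      then show ?thesis unfolding \<delta>_def by (rule small_E)
    qed
    then show "\<exists>N. \<forall>n\<ge>N. small q (\<delta> n)" by blast
  qed
  then obtain \<Delta> where D: "lc_sums \<delta> \<Delta>" by blast
  have "PS \<delta> k \<le> \<epsilon>" for k
  proof -
    have "lc_pos (\<epsilon> - PS \<delta> k)" unfolding lc_pos_iff minus_lc.rep_eq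
      using p Rep_E_sum_zero[of _ p k] unfolding \<delta>_def
      by (intro exI[of _ p]) auto
    then show ?thesis by (simp add: less_iff_pos less_imp_le)
  qed
  then have "\<Delta> \<le> \<epsilon>" using D unfolding sums_PS by (rule_tac lim_le[of "PS \<delta>"]) auto
  moreover have "\<forall>n. 0 < \<delta> n" unfolding \<delta>_def by (simp add: E_pos)
  ultimately show ?thesis using D by blast
qed

lemma pc_cover:
  assumes "pc X lo hi s" "0 < \<epsilon>"
  shows "\<exists>s'\<in>cover_sums X. s' \<le> s + \<epsilon>"
proof -
  obtain \<delta> \<Delta> where d: "\<forall>n. 0 < \<delta> n" "lc_sums \<delta> \<Delta>" "\<Delta> \<le> \<epsilon>"
    using small_seq[OF assms(2)] by blast
  define S where "S n = {lo n..hi n + \<delta> n}" for n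
  have lt: "lo n < hi n + \<delta> n" if "n \<ge> 1" for n
    using assms(1) d(1) that unfolding pc_def by (metis add_le_less_mono add_0_right)
  have int: "lc_interval (S n)" if "n \<ge> 1" for n
    unfolding lc_interval_def S_def using lt[OF that] by blast
  have len: "lc_len (S n) = (hi n - lo n) + \<delta> n" if "n \<ge> 1" for n
    unfolding S_def using len_eq[of "lo n" "hi n + \<delta> n" "{lo n..hi n + \<delta> n}"] lt[OF that]
    by (simp add: algebra_simps)
  have cov: "X \<subseteq> (\<Union>n\<in>{1..}. S n)"
  proof
    fix x assume "x \<in> X"
    then obtain n where n: "n \<ge> 1" "x \<in> {lo n..hi n}" using assms(1) unfolding pc_def by blast
    then have "x \<in> S n" unfolding S_def using d(1) by (auto intro: order_trans[OF _ less_imp_le] simp: add_increasing2 less_imp_le)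
    then show "x \<in> (\<Union>n\<in>{1..}. S n)" using n by auto
  qed
  have sm: "lc_sums (\<lambda>n. lc_len (S n)) (s + \<Delta>)"
  proof (rule sums_cong)
    show "lc_sums (\<lambda>n. (hi n - lo n) + \<delta> n) (s + \<Delta>)"
      using assms(1) d(2) unfolding pc_def by (intro sums_add) auto
  qed (simp add: len)
  have "s + \<Delta> \<in> cover_sums X"
    unfolding cover_sums_def lc_cover_def using int cov sm by blast
  moreover have "s + \<Delta> \<le> s + \<epsilon>" using d(3) by simp
  ultimately show ?thesis by blast
qed

lemma inf_le_pc:
  assumes "lc_is_inf (cover_sums X) m" "pc X lo hi s"
  shows "m \<le> s"
proof (rule ccontr)
  assume "\<not> m \<le> s"
  then have "s < m" by simp
  then obtain z where z: "s < z" "z < m" using dense by blast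
  then obtain s' where s': "s' \<in> cover_sums X" "s' \<le> s + (z - s)"
    using pc_cover[OF assms(2), of "z - s"] by auto
  then have "m \<le> s'" using assms(1) unfolding lc_is_inf_def by blast
  then show False using s' z by simp
qed

lemma inf_approx:
  assumes "lc_is_inf C m" "0 < \<epsilon>"
  shows "\<exists>s\<in>C. s < m + \<epsilon>"
proof (rule ccontr)
  assume "\<not> (\<exists>s\<in>C. s < m + \<epsilon>)"
  then have "\<forall>s\<in>C. m + \<epsilon> \<le> s" by (auto simp: not_less)
  then have "m + \<epsilon> \<le> m" using assms(1) unfolding lc_is_inf_def by blast
  then show False using assms(2) by simp
qed

lemma inf_unique: "lc_is_inf C m \<Longrightarrow> lc_is_inf C m' \<Longrightarrow> m = m'"
  unfolding lc_is_inf_def by (meson order_antisym)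

lemma M_u_eq: "lc_is_inf (cover_sums X) m \<Longrightarrow> M_u X = m"
  unfolding M_u_def using inf_unique by blast


lemma E_mono: "j \<le> k \<Longrightarrow> E k \<le> E j"
proof (cases "j = k")
  case False
  assume "j \<le> k"
  with False have jk: "j < k" by simp
  have "lc_pos (E j - E k)" unfolding lc_pos_iff minus_lc.rep_eq E.rep_eq
    using jk by (intro exI[of _ j]) auto
  then show ?thesis by (simp add: less_iff_pos less_imp_le)
qed simp

lemma cut_lemma:
  assumes H: "\<And>\<epsilon>. 0 < \<epsilon> \<Longrightarrow> \<exists>l s. (\<forall>y\<in>C. l \<le> y) \<and> s \<in> C \<and> s - l \<le> \<epsilon>"
  shows "\<exists>m. lc_is_inf C m"
proof -
  have "\<forall>j::nat. \<exists>p. (\<forall>y\<in>C. fst p \<le> y) \<and> snd p \<in> C \<and> snd p - fst p \<le> E (of_nat j)"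
  proof
    fix j :: nat
    obtain l s where "(\<forall>y\<in>C. l \<le> y) \<and> s \<in> C \<and> s - l \<le> E (of_nat j)"
      using H[OF E_pos] by blast
    then show "\<exists>p. (\<forall>y\<in>C. fst p \<le> y) \<and> snd p \<in> C \<and> snd p - fst p \<le> E (of_nat j)"
      by (intro exI[of _ "(l, s)"]) auto
  qed
  then obtain P where P: "\<And>j. (\<forall>y\<in>C. fst (P j) \<le> y) \<and> snd (P j) \<in> C \<and> snd (P j) - fst (P j) \<le> E (of_nat j)"
    using choice[of "\<lambda>j p. (\<forall>y\<in>C. fst p \<le> y) \<and> snd p \<in> C \<and> snd p - fst p \<le> E (of_nat j)"] by blast
  define l where "l j = fst (P j)" for j
  define s where "s j = snd (P j)" for j
  have lb: "\<forall>y\<in>C. l j \<le> y" for j using P unfolding l_def by blast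
  have sC: "s j \<in> C" for j using P unfolding s_def by blast
  have d: "s j - l j \<le> E (of_nat j)" for j using P unfolding s_def l_def by blast
  have ls: "l j \<le> s k" for j k using lb sC by blast
  have "\<exists>L. lc_lim s L"
  proof (rule lim_cauchy)
    fix q :: rat
    obtain N :: nat where N: "q < of_nat N" using reals_Archimedean2 by blast
    have "small q (s m - s n)" if "m \<ge> N" "n \<ge> N" for m n
    proof -
      have a1: "s m - s n \<le> E (of_nat N)"
      proof -
        have "s m - s n \<le> s m - l m" using ls[of m n] by (simp add: diff_left_mono)
        also have "\<dots> \<le> E (of_nat m)" by (rule d)
        also have "\<dots> \<le> E (of_nat N)" by (rule E_mono) (use that(1) in simp)
        finally show ?thesis .
      qed
      have a2: "- (s m - s n) \<le> E (of_nat N)"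
      proof -
        have "- (s m - s n) \<le> s n - l n" using ls[of n m] by simp
        also have "\<dots> \<le> E (of_nat n)" by (rule d)
        also have "\<dots> \<le> E (of_nat N)" by (rule E_mono) (use that(2) in simp)
        finally show ?thesis .
      qed
      show ?thesis using le_E_small[OF a1 a2 N] .
    qed
    then show "\<exists>N. \<forall>m\<ge>N. \<forall>n\<ge>N. small q (s m - s n)" by blast
  qed
  then obtain L where L: "lc_lim s L" by blast
  have E0: "lc_lim (\<lambda>j. E (of_nat j)) 0" unfolding lim_iff_small
  proof
    fix q :: rat
    obtain N :: nat where N: "q < of_nat N" using reals_Archimedean2 by blast
    have "small q (E (of_nat n) - 0)" if "n \<ge> N" for n
    proof -
      have "(of_nat N :: rat) \<le> of_nat n" using that by simp
      then have "q < of_nat n" using N by linarith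
      then show ?thesis by (simp add: small_E)
    qed
    then show "\<exists>N. \<forall>n\<ge>N. small q (E (of_nat n) - 0)" by blast
  qed
  have "lc_lim (\<lambda>j. s j - l j) 0"
  proof (rule lim_sandwich)
    show "0 \<le> s j - l j" for j using ls[of j j] by simp
  qed (rule d, rule E0)
  then have "lc_lim (\<lambda>j. s j - (s j - l j)) (L - 0)" using L lim_diff by blast
  then have Ll: "lc_lim l L" by simp
  have "\<forall>y\<in>C. L \<le> y"
  proof
    fix y assume "y \<in> C"
    then show "L \<le> y" using lb by (rule_tac lim_le[OF Ll]) auto
  qed
  moreover have "m' \<le> L" if "\<forall>y\<in>C. m' \<le> y" for m'
    using that sC by (rule_tac lim_ge[OF L]) auto
  ultimately show ?thesis unfolding lc_is_inf_def by blast
qed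

lemma pc_split:
  assumes "pc X lo hi s" "c < d" "{c<..<d} \<subseteq> I" "I \<subseteq> {c..d}"
  shows "\<exists>lo1 hi1 s1 lo2 hi2 s2. pc (X - I) lo1 hi1 s1 \<and> pc (X \<inter> I) lo2 hi2 s2 \<and> s1 + s2 = s"
proof -
  define u1 where "u1 n = max (lo n) (min (hi n) c)" for n
  define u2 where "u2 n = max (lo n) (min (hi n) d)" for n
  have lh: "lo n \<le> hi n" if "n \<ge> 1" for n using assms(1) that unfolding pc_def by blast
  have o1: "lo n \<le> u1 n" for n unfolding u1_def by simp
  have o2: "u1 n \<le> u2 n" for n unfolding u1_def u2_def using assms(2) by (auto simp: max_def min_def)
  have o3: "u2 n \<le> hi n" if "n \<ge> 1" for n unfolding u2_def using lh[OF that] by (auto simp: max_def min_def)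
  have hs: "lc_sums (\<lambda>n. hi n - lo n) s" using assms(1) unfolding pc_def by blast
  obtain sA where sA: "lc_sums (\<lambda>n. u1 n - lo n) sA"
  proof -
    have "\<exists>x. lc_sums (\<lambda>n. u1 n - lo n) x"
    proof (rule sums_compare[OF _ hs])
      fix n :: nat assume "n \<ge> 1"
      then show "0 \<le> u1 n - lo n \<and> u1 n - lo n \<le> hi n - lo n"
        using o1[of n] o2[of n] o3[of n] by simp
    qed
    then show ?thesis using that by blast
  qed
  obtain sM where sM: "lc_sums (\<lambda>n. u2 n - u1 n) sM"
  proof -
    have "\<exists>x. lc_sums (\<lambda>n. u2 n - u1 n) x"
    proof (rule sums_compare[OF _ hs])
      fix n :: nat assume "n \<ge> 1"
      then show "0 \<le> u2 n - u1 n \<and> u2 n - u1 n \<le> hi n - lo n"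
        using o1[of n] o2[of n] o3[of n] by (simp add: diff_mono)
    qed
    then show ?thesis using that by blast
  qed
  obtain sB where sB: "lc_sums (\<lambda>n. hi n - u2 n) sB"
  proof -
    have "\<exists>x. lc_sums (\<lambda>n. hi n - u2 n) x"
    proof (rule sums_compare[OF _ hs])
      fix n :: nat assume "n \<ge> 1"
      then show "0 \<le> hi n - u2 n \<and> hi n - u2 n \<le> hi n - lo n"
        using o1[of n] o2[of n] o3[of n] by simp
    qed
    then show ?thesis using that by blast
  qed
  have "lc_sums (\<lambda>n. (u1 n - lo n) + (u2 n - u1 n) + (hi n - u2 n)) (sA + sM + sB)"
    by (intro sums_add sA sB sM)
  moreover have "(\<lambda>n. (u1 n - lo n) + (u2 n - u1 n) + (hi n - u2 n)) = (\<lambda>n. hi n - lo n)"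
    by (simp add: algebra_simps)
  ultimately have "lc_sums (\<lambda>n. hi n - lo n) (sA + sM + sB)" by simp
  then have sum_eq: "sA + sM + sB = s" using hs unfolding sums_PS by (rule lim_unique)
  define XL where "XL = {x\<in>X. x \<le> c}"
  define XR where "XR = {x\<in>X. d \<le> x}"
  have pL: "pc XL lo u1 sA" unfolding pc_def
  proof (intro conjI)
    show "\<forall>n\<ge>1. lo n \<le> u1 n" using o1 by blast
    show "XL \<subseteq> (\<Union>n\<in>{1..}. {lo n..u1 n})"
    proof
      fix x assume "x \<in> XL"
      then have x: "x \<in> X" "x \<le> c" unfolding XL_def by auto
      then obtain n where n: "n \<ge> 1" "lo n \<le> x" "x \<le> hi n" using assms(1) unfolding pc_def by auto
      then have "x \<le> u1 n" unfolding u1_def using x by (auto simp: max_def min_def)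
      then show "x \<in> (\<Union>n\<in>{1..}. {lo n..u1 n})" using n by auto
    qed
  qed (rule sA)
  have pR: "pc XR u2 hi sB" unfolding pc_def
  proof (intro conjI)
    show "\<forall>n\<ge>1. u2 n \<le> hi n" using o3 by blast
    show "XR \<subseteq> (\<Union>n\<in>{1..}. {u2 n..hi n})"
    proof
      fix x assume "x \<in> XR"
      then have x: "x \<in> X" "d \<le> x" unfolding XR_def by auto
      then obtain n where n: "n \<ge> 1" "lo n \<le> x" "x \<le> hi n" using assms(1) unfolding pc_def by auto
      then have "u2 n \<le> x" unfolding u2_def using x by (auto simp: max_def min_def)
      then show "x \<in> (\<Union>n\<in>{1..}. {u2 n..hi n})" using n by auto
    qed
  qed (rule sB)
  have pM: "pc (X \<inter> I) u1 u2 sM" unfolding pc_def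
  proof (intro conjI)
    show "\<forall>n\<ge>1. u1 n \<le> u2 n" using o2 by blast
    show "X \<inter> I \<subseteq> (\<Union>n\<in>{1..}. {u1 n..u2 n})"
    proof
      fix x assume "x \<in> X \<inter> I"
      then have x: "x \<in> X" "c \<le> x" "x \<le> d" using assms(4) by auto
      then obtain n where n: "n \<ge> 1" "lo n \<le> x" "x \<le> hi n" using assms(1) unfolding pc_def by auto
      then have "u1 n \<le> x" "x \<le> u2 n" unfolding u1_def u2_def using x by (auto simp: max_def min_def)
      then show "x \<in> (\<Union>n\<in>{1..}. {u1 n..u2 n})" using n by auto
    qed
  qed (rule sM)
  have "X - I \<subseteq> XL \<union> XR"
  proof
    fix x assume "x \<in> X - I"
    then have "\<not> (c < x \<and> x < d)" "x \<in> X" using assms(3) by auto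
    then show "x \<in> XL \<union> XR" unfolding XL_def XR_def by (auto simp: not_less)
  qed
  then have "pc (X - I) (il lo u2) (il u1 hi) (sA + sB)"
    using pc_union[OF pL pR] by (rule_tac pc_mono) auto
  moreover have "(sA + sB) + sM = s" using sum_eq by (simp add: algebra_simps)
  ultimately show ?thesis using pM by blast
qed

lemma half_sum_lt: "a < half e \<Longrightarrow> b < half e \<Longrightarrow> a + b < e"
  using add_strict_mono half_double by metis

lemma measurable_diff:
  assumes m: "lc_is_inf (cover_sums X) m" and I: "lc_interval I"
  shows "outer_measurable (X - I)"
  unfolding outer_measurable_def
proof (rule cut_lemma)
  fix \<epsilon> :: lc assume "0 < \<epsilon>"
  then have h: "0 < half \<epsilon>" by (rule half_pos)
  obtain c d where cd: "c < d" "{c<..<d} \<subseteq> I" "I \<subseteq> {c..d}"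
    using interval_ends[OF I] by blast
  obtain s where s: "s \<in> cover_sums X" "s < m + half \<epsilon>" using inf_approx[OF m h] by blast
  obtain lo hi where "pc X lo hi s" using cover_pc[OF s(1)] by blast
  then obtain lo1 hi1 s1 lo2 hi2 s2 where p1: "pc (X - I) lo1 hi1 s1" and p2: "pc (X \<inter> I) lo2 hi2 s2"
    and ss: "s1 + s2 = s"
    using pc_split[OF _ cd] by blast
  obtain s' where s': "s' \<in> cover_sums (X - I)" "s' \<le> s1 + half \<epsilon>"
    using pc_cover[OF p1 h] by blast
  have lb: "\<forall>y\<in>cover_sums (X - I). m - s2 \<le> y"
  proof
    fix y assume "y \<in> cover_sums (X - I)"
    then obtain loy hiy where "pc (X - I) loy hiy y" using cover_pc by blast
    from pc_union[OF this p2] have "pc ((X - I) \<union> (X \<inter> I)) (il loy lo2) (il hiy hi2) (y + s2)" .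
    then have "pc X (il loy lo2) (il hiy hi2) (y + s2)" by (rule pc_mono) auto
    then have "m \<le> y + s2" by (rule inf_le_pc[OF m])
    then show "m - s2 \<le> y" by (simp add: algebra_simps)
  qed
  have "s' - (m - s2) \<le> \<epsilon>"
  proof -
    have "s' - (m - s2) \<le> s1 + half \<epsilon> + s2 - m" using s'(2) by (simp add: algebra_simps)
    also have "\<dots> = (s - m) + half \<epsilon>" using ss by (simp add: algebra_simps)
    also have "\<dots> < half \<epsilon> + half \<epsilon>" using s(2) by (simp add: algebra_simps)
    also have "\<dots> = \<epsilon>" by (rule half_double)
    finally show ?thesis by simp
  qed
  then show "\<exists>l s. (\<forall>y\<in>cover_sums (X - I). l \<le> y) \<and> s \<in> cover_sums (X - I) \<and> s - l \<le> \<epsilon>"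
    using lb s'(1) by blast
qed


lemma cover_sums_mono: "Y \<subseteq> X \<Longrightarrow> cover_sums X \<subseteq> cover_sums Y"
  unfolding cover_sums_def lc_cover_def by blast

lemma Bk_Suc: "A - (\<Union>n\<in>{1..Suc k}. I n) = (A - (\<Union>n\<in>{1..k}. I n)) - I (Suc k)"
  by (auto simp: atLeastAtMostSuc_conv)

lemma intervals_pc:
  assumes "\<forall>n\<ge>1. lc_interval (I n)"
  shows "\<exists>lo hi. (\<forall>n\<ge>1. lo n \<le> hi n \<and> lc_len (I n) = hi n - lo n \<and> I n \<subseteq> {lo n..hi n})"
proof -
  have "\<forall>n. \<exists>p. n \<ge> 1 \<longrightarrow> fst p < snd p \<and> lc_len (I n) = snd p - fst p \<and> I n \<subseteq> {fst p..snd p}"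
  proof
    fix n
    show "\<exists>p. n \<ge> 1 \<longrightarrow> fst p < snd p \<and> lc_len (I n) = snd p - fst p \<and> I n \<subseteq> {fst p..snd p}"
    proof (cases "n \<ge> 1")
      case True
      then have "lc_interval (I n)" using assms by blast
      then obtain a b where "a < b \<and> lc_len (I n) = b - a \<and> {a<..<b} \<subseteq> I n \<and> I n \<subseteq> {a..b}"
        using interval_ends by blast
      then show ?thesis by (intro exI[of _ "(a, b)"]) auto
    qed auto
  qed
  then obtain P where P: "\<And>n. n \<ge> 1 \<longrightarrow> fst (P n) < snd (P n) \<and> lc_len (I n) = snd (P n) - fst (P n) \<and> I n \<subseteq> {fst (P n)..snd (P n)}"
    using choice[of "\<lambda>n p. n \<ge> 1 \<longrightarrow> fst p < snd p \<and> lc_len (I n) = snd p - fst p \<and> I n \<subseteq> {fst p..snd p}"] by blast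
  show ?thesis
    by (rule exI[of _ "\<lambda>n. fst (P n)"], rule exI[of _ "\<lambda>n. snd (P n)"]) (use P in \<open>auto intro: less_imp_le\<close>)
qed

theorem lemma3p1:
  fixes A :: "lc set" and I :: "nat \<Rightarrow> lc set"
  assumes "outer_measurable A"
    and "\<forall>n\<ge>1. lc_interval (I n)"
    and "\<forall>m\<ge>1. \<forall>n\<ge>1. m \<noteq> n \<longrightarrow> I m \<inter> I n = {}"
    and "lc_lim (\<lambda>n. lc_len (I n)) 0"
  shows "outer_measurable (A - (\<Union>n\<in>{1..}. I n))
    \<and> (\<exists>L. lc_lim (\<lambda>k. M_u (A - (\<Union>n\<in>{1..k}. I n))) L)
    \<and> lc_lim (\<lambda>k. M_u (A - (\<Union>n\<in>{1..k}. I n))) (M_u (A - (\<Union>n\<in>{1..}. I n)))"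
proof -
  define B where "B = A - (\<Union>n\<in>{1..}. I n)"
  define Bk where "Bk k = A - (\<Union>n\<in>{1..k}. I n)" for k
  have meas: "outer_measurable (Bk k)" for k
  proof (induction k)
    case 0 then show ?case unfolding Bk_def using assms(1) by simp
  next
    case (Suc k)
    then obtain m where "lc_is_inf (cover_sums (Bk k)) m" unfolding outer_measurable_def by blast
    moreover have "lc_interval (I (Suc k))" using assms(2) by simp
    ultimately have "outer_measurable (Bk k - I (Suc k))" by (rule measurable_diff)
    then show ?case unfolding Bk_def Bk_Suc .
  qed
  obtain mk where mk: "\<And>k. lc_is_inf (cover_sums (Bk k)) (mk k)"
    using meas unfolding outer_measurable_def by metis
  obtain lo hi where lh: "\<And>n. n \<ge> 1 \<Longrightarrow> lo n \<le> hi n \<and> lc_len (I n) = hi n - lo n \<and> I n \<subseteq> {lo n..hi n}"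
    using intervals_pc[OF assms(2)] by blast
  obtain T where T0: "lc_sums (\<lambda>n. lc_len (I n)) T"
  proof -
    have "\<exists>T. lc_sums (\<lambda>n. lc_len (I n)) T"
    proof (rule series_conv)
      fix q
      obtain N where "\<forall>n\<ge>N. small q (lc_len (I n) - 0)" using assms(4) unfolding lim_iff_small by blast
      then show "\<exists>N. \<forall>n\<ge>N. small q (lc_len (I n))" by auto
    qed
    then show ?thesis using that by blast
  qed
  have T: "lc_sums (\<lambda>n. hi n - lo n) T" using T0 by (rule sums_cong) (use lh in auto)
  define Tk where "Tk k = T - PS (\<lambda>n. hi n - lo n) k" for k
  have Tk0: "lc_lim Tk 0"
  proof -
    have "lc_lim (\<lambda>k. T - PS (\<lambda>n. hi n - lo n) k) (T - T)"
      using T unfolding sums_PS by (intro lim_diff lim_const)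
    then show ?thesis unfolding Tk_def by simp
  qed
  have tail: "pc (\<Union>n\<in>{1..}. {lo (n + k)..hi (n + k)}) (\<lambda>n. lo (n + k)) (\<lambda>n. hi (n + k)) (Tk k)" for k
    unfolding pc_def Tk_def
  proof (intro conjI)
    show "\<forall>n\<ge>1. lo (n + k) \<le> hi (n + k)" using lh by auto
    show "lc_sums (\<lambda>n. hi (n + k) - lo (n + k)) (T - PS (\<lambda>n. hi n - lo n) k)"
      using sums_shift[OF T, of k] by simp
  qed simp
  have sub: "Bk k \<subseteq> B \<union> (\<Union>n\<in>{1..}. {lo (n + k)..hi (n + k)})" for k
  proof
    fix x assume x: "x \<in> Bk k"
    show "x \<in> B \<union> (\<Union>n\<in>{1..}. {lo (n + k)..hi (n + k)})"
    proof (cases "x \<in> B")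
      case False
      then obtain n where n: "n \<ge> 1" "x \<in> I n" using x unfolding B_def Bk_def by auto
      then have "n > k" using x unfolding Bk_def by auto
      then have "n = (n - k) + k" "n - k \<ge> 1" by auto
      moreover have "x \<in> {lo n..hi n}" using lh[OF n(1)] n(2) by auto
      ultimately show ?thesis by (metis UN_iff UnI2 atLeast_iff)
    qed simp
  qed
  have ii: "mk k \<le> s + Tk k" if sB: "s \<in> cover_sums B" for s k
  proof -
    obtain lo1 hi1 where "pc B lo1 hi1 s" using cover_pc[OF sB] by blast
    from pc_union[OF this tail[of k]]
    have "pc (Bk k) (il lo1 (\<lambda>n. lo (n + k))) (il hi1 (\<lambda>n. hi (n + k))) (s + Tk k)"
      using sub[of k] by (rule_tac pc_mono) auto
    then show ?thesis by (rule inf_le_pc[OF mk])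
  qed
  have BkB: "cover_sums (Bk k) \<subseteq> cover_sums B" for k
    by (rule cover_sums_mono) (auto simp: B_def Bk_def)
  obtain m where m: "lc_is_inf (cover_sums B) m"
  proof -
    have "\<exists>m. lc_is_inf (cover_sums B) m"
    proof (rule cut_lemma)
      fix \<epsilon> :: lc assume "0 < \<epsilon>"
      then have h: "0 < half \<epsilon>" by (rule half_pos)
      obtain N where N: "\<forall>n\<ge>N. 0 - half \<epsilon> < Tk n \<and> Tk n < 0 + half \<epsilon>"
        using Tk0 h unfolding lc_lim_def by blast
      obtain s where s: "s \<in> cover_sums (Bk N)" "s < mk N + half \<epsilon>" using inf_approx[OF mk h] by blast
      have lb: "\<forall>y\<in>cover_sums B. mk N - Tk N \<le> y"
        using ii by (auto simp: algebra_simps)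
      have tn: "Tk N < half \<epsilon>" using N by simp
      have "s - mk N < half \<epsilon>" using s(2) by (simp add: algebra_simps)
      then have "(s - mk N) + Tk N < half \<epsilon> + half \<epsilon>" using tn by (rule add_strict_mono)
      then have "s - (mk N - Tk N) < half \<epsilon> + half \<epsilon>" by (simp add: algebra_simps)
      then have "s - (mk N - Tk N) \<le> \<epsilon>" unfolding half_double by simp
      then show "\<exists>l s. (\<forall>y\<in>cover_sums B. l \<le> y) \<and> s \<in> cover_sums B \<and> s - l \<le> \<epsilon>"
        using lb s(1) BkB by blast
    qed
    then show ?thesis using that by blast
  qed
  have up: "m \<le> mk k" for k
  proof -
    have "\<forall>y\<in>cover_sums (Bk k). m \<le> y" using m BkB unfolding lc_is_inf_def by blast
    then show ?thesis using mk unfolding lc_is_inf_def by blast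
  qed
  have lo': "mk k - Tk k \<le> m" for k
  proof -
    have "\<forall>y\<in>cover_sums B. mk k - Tk k \<le> y" using ii by (auto simp: algebra_simps)
    then show ?thesis using m unfolding lc_is_inf_def by blast
  qed
  have "lc_lim (\<lambda>k. mk k - m) 0"
  proof (rule lim_sandwich)
    show "0 \<le> mk k - m" for k using up[of k] by simp
    show "mk k - m \<le> Tk k" for k using lo'[of k] by (simp add: algebra_simps)
  qed (rule Tk0)
  then have lim: "lc_lim mk m" unfolding lim_iff_small by simp
  have MB: "M_u B = m" by (rule M_u_eq[OF m])
  have MBk: "M_u (Bk k) = mk k" for k by (rule M_u_eq[OF mk])
  have "outer_measurable B" using m unfolding outer_measurable_def by blast
  moreover have "lc_lim (\<lambda>k. M_u (Bk k)) (M_u B)" unfolding MB MBk using lim by simp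
  ultimately show ?thesis unfolding B_def Bk_def by blast
qed

end
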